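(* Let $I=[0,1]$ with Lebesgue measure $\lambda$, let $r>0$ be a constant, and let all agents share a common right-continuous filtration $\mathbb G^i=\mathbb G$. Let $X$ be a right-continuous, increasing, $\mathbb G$-progressively measurable real process with $X_\infty>1$. Suppose agent $i$ has intensity $\gamma^i_t=(r-i+\rho_t)\vee0$. Then $\rho_t=(X_t\wedge1)\vee0$ together with $\tau^i=\inf\{t:\ X_t\ge i\}$ is an equilibrium: each $\tau^i$ is optimal for agent $i$ and $\lambda\{i:\ \tau^i\le t\}=\rho_t$ for all $t\ge0$.
   Context: Let $(\Omega,\mathcal F,P)$ be a probability space with right-continuous filtration $\mathbb G$ and an exponential random variable $\mathcal E$ with mean $1$ independent of $\mathcal G_\infty$. $\mathcal T$ is the set of $\mathbb G$-stopping times. For agent $i$ with intensity $\gamma^i\ge0$, $\theta^{i}=\inf\{t:\int_0^t\gamma^i_s\,ds=\mathcal E\}$, and agent $i$'s problem is $\sup_{\tau\in\mathcal T}E[e^{r\tau}\mathbf 1_{\{\theta^i>\tau\}\cup\{\theta^i=\infty\}}]$. An equilibrium is a family $(\tau^i)_{i\in I}$ of stopping times with $\tau^i$ optimal for $\lambda$-a.e. $i$ (given $\gamma^i$ computed from $\rho$) and $\rho_t=\lambda\{i:\tau^i\le t\}$ for all $t$. *)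

theory Defs
  imports "HOL-Probability.Probability"
begin

text \<open>Time runs over [0,\<infinity>). A filtration is a family G :: real \<Rightarrow> 'a measure of sub-sigma-algebras
  of the underlying probability space (only t \<ge> 0 is relevant). Stopping times take values
  in [0,\<infinity>], modelled as ennreal.\<close>

definition G_infty :: "'a measure \<Rightarrow> (real \<Rightarrow> 'a measure) \<Rightarrow> 'a measure" where
  "G_infty M G = sigma (space M) (\<Union>t\<in>{0..}. sets (G t))"

definition right_continuous_filtration :: "'a measure \<Rightarrow> (real \<Rightarrow> 'a measure) \<Rightarrow> bool" where
  "right_continuous_filtration M G \<longleftrightarrow>
     (\<forall>t. space (G t) = space M \<and> sets (G t) \<subseteq> sets M) \<and>
     (\<forall>s t. 0 \<le> s \<longrightarrow> s \<le> t \<longrightarrow> sets (G s) \<subseteq> sets (G t)) \<and>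
     (\<forall>t\<ge>0. sets (G t) = (\<Inter>s\<in>{t<..}. sets (G s)))"

definition G_stopping_time :: "(real \<Rightarrow> 'a measure) \<Rightarrow> ('a \<Rightarrow> ennreal) \<Rightarrow> bool" where
  "G_stopping_time G \<tau> \<longleftrightarrow> (\<forall>t\<ge>0. Measurable.pred (G t) (\<lambda>\<omega>. \<tau> \<omega> \<le> ennreal t))"

definition progressive :: "(real \<Rightarrow> 'a measure) \<Rightarrow> (real \<Rightarrow> 'a \<Rightarrow> real) \<Rightarrow> bool" where
  "progressive G X \<longleftrightarrow> (\<forall>t\<ge>0.
     (\<lambda>p. X (fst p) (snd p)) \<in> borel_measurable (restrict_space lborel {0..t} \<Otimes>\<^sub>M G t))"

text \<open>Default time: \<theta> = inf{t \<ge> 0 : \<integral>_0^t \<gamma>_s ds = \<E>} (inf of the empty set is \<infinity>).\<close>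
definition default_time :: "(real \<Rightarrow> 'a \<Rightarrow> real) \<Rightarrow> ('a \<Rightarrow> real) \<Rightarrow> 'a \<Rightarrow> ennreal" where
  "default_time \<gamma> Ee \<omega> =
     Inf {ennreal t | t. 0 \<le> t \<and> (\<integral>\<^sup>+ s\<in>{0..t}. ennreal (\<gamma> s \<omega>) \<partial>lborel) = ennreal (Ee \<omega>)}"

definition payoff :: "real \<Rightarrow> ennreal \<Rightarrow> ennreal \<Rightarrow> ennreal" where
  "payoff r \<tau> \<theta> =
     (if \<tau> < \<theta> \<or> \<theta> = \<infinity> then (if \<tau> = \<infinity> then \<infinity> else ennreal (exp (r * enn2real \<tau>))) else 0)"

definition agent_value ::
  "'a measure \<Rightarrow> real \<Rightarrow> (real \<Rightarrow> 'a \<Rightarrow> real) \<Rightarrow> ('a \<Rightarrow> real) \<Rightarrow> ('a \<Rightarrow> ennreal) \<Rightarrow> ennreal" where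
  "agent_value M r \<gamma> Ee \<tau> = (\<integral>\<^sup>+ \<omega>. payoff r (\<tau> \<omega>) (default_time \<gamma> Ee \<omega>) \<partial>M)"

definition optimal_stopping ::
  "'a measure \<Rightarrow> (real \<Rightarrow> 'a measure) \<Rightarrow> real \<Rightarrow> (real \<Rightarrow> 'a \<Rightarrow> real) \<Rightarrow> ('a \<Rightarrow> real)
     \<Rightarrow> ('a \<Rightarrow> ennreal) \<Rightarrow> bool" where
  "optimal_stopping M G r \<gamma> Ee \<tau> \<longleftrightarrow>
     G_stopping_time G \<tau> \<and>
     agent_value M r \<gamma> Ee \<tau> = (SUP \<sigma>\<in>{\<sigma>. G_stopping_time G \<sigma>}. agent_value M r \<gamma> Ee \<sigma>)"

end

theory Submission
  imports Defs
begin

lemma indep_nn_integral: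
  fixes MG :: "'a measure" and Ee :: "'a \<Rightarrow> real" and F :: "'a \<times> real \<Rightarrow> ennreal"
  assumes P: "prob_space M"
    and sub: "sets MG \<subseteq> sets M" and sp: "space MG = space M"
    and ind: "prob_space.indep_set M (sets MG) {Ee -` A \<inter> space M | A. A \<in> sets (borel :: real measure)}"
    and Em: "Ee \<in> borel_measurable M"
    and F: "F \<in> borel_measurable (MG \<Otimes>\<^sub>M borel)"
  shows "(\<integral>\<^sup>+\<omega>. F (\<omega>, Ee \<omega>) \<partial>M) = (\<integral>\<^sup>+\<omega>. (\<integral>\<^sup>+e. F (\<omega>, e) \<partial>distr M borel Ee) \<partial>M)"
proof -
  interpret prob_space M by fact
  have idm: "(\<lambda>x. x) \<in> measurable M MG"
  proof (rule measurableI)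
    fix x assume "x \<in> space M" then show "x \<in> space MG" using sp by simp
  next
    fix A assume "A \<in> sets MG"
    then have "A \<subseteq> space M" using sets.sets_into_space sp by metis
    then have "(\<lambda>x. x) -` A \<inter> space M = A" by auto
    then show "(\<lambda>x. x) -` A \<inter> space M \<in> sets M" using \<open>A \<in> sets MG\<close> sub by auto
  qed
  have pm: "(\<lambda>x. (x, Ee x)) \<in> measurable M (MG \<Otimes>\<^sub>M borel)"
    using idm Em by measurable
  interpret X: prob_space "distr M MG (\<lambda>x. x)" using idm by (rule prob_space_distr)
  interpret Y: prob_space "distr M borel Ee" using Em by (rule prob_space_distr)
  have deq: "distr M MG (\<lambda>x. x) \<Otimes>\<^sub>M distr M borel Ee = distr M (MG \<Otimes>\<^sub>M borel) (\<lambda>x. (x, Ee x))"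
  proof (rule pair_measure_eqI)
    show "sigma_finite_measure (distr M MG (\<lambda>x. x))" ..
    show "sigma_finite_measure (distr M borel Ee)" ..
    fix A B assume A: "A \<in> sets (distr M MG (\<lambda>x. x))" and B: "B \<in> sets (distr M borel Ee)"
    have "emeasure (distr M (MG \<Otimes>\<^sub>M borel) (\<lambda>x. (x, Ee x))) (A \<times> B) = emeasure M ((\<lambda>x. (x, Ee x)) -` (A \<times> B) \<inter> space M)"
      using A B by (intro emeasure_distr[OF pm]) auto
    also have "(\<lambda>x. (x, Ee x)) -` (A \<times> B) \<inter> space M = ((\<lambda>x. x) -` A \<inter> space M) \<inter> (Ee -` B \<inter> space M)" by auto
    also have "emeasure M \<dots> = emeasure M ((\<lambda>x. x) -` A \<inter> space M) * emeasure M (Ee -` B \<inter> space M)"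
    proof -
      have AA: "(\<lambda>x. x) -` A \<inter> space M = A" using A sets.sets_into_space sp by fastforce
      have "prob (A \<inter> (Ee -` B \<inter> space M)) = prob A * prob (Ee -` B \<inter> space M)"
        using A B by (intro indep_setD[OF ind]) auto
      then show ?thesis unfolding AA by (simp add: emeasure_eq_measure measure_nonneg ennreal_mult)
    qed
    also have "\<dots> = emeasure (distr M MG (\<lambda>x. x)) A * emeasure (distr M borel Ee) B"
      using idm Em A B by (simp add: emeasure_distr)
    finally show "emeasure (distr M MG (\<lambda>x. x)) A * emeasure (distr M borel Ee) B = emeasure (distr M (MG \<Otimes>\<^sub>M borel) (\<lambda>x. (x, Ee x))) (A \<times> B)" by simp
  qed simp
  have "(\<integral>\<^sup>+\<omega>. F (\<omega>, Ee \<omega>) \<partial>M) = (\<integral>\<^sup>+p. F p \<partial>distr M (MG \<Otimes>\<^sub>M borel) (\<lambda>x. (x, Ee x)))"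
    using pm F by (simp add: nn_integral_distr)
  also have "\<dots> = (\<integral>\<^sup>+p. F p \<partial>(distr M MG (\<lambda>x. x) \<Otimes>\<^sub>M distr M borel Ee))"
    using deq by simp
  also have "\<dots> = (\<integral>\<^sup>+\<omega>. (\<integral>\<^sup>+e. F (\<omega>, e) \<partial>distr M borel Ee) \<partial>distr M MG (\<lambda>x. x))"
    by (rule Y.nn_integral_fst[symmetric]) (use F in simp)
  also have "\<dots> = (\<integral>\<^sup>+\<omega>. (\<integral>\<^sup>+e. F (\<omega>, e) \<partial>distr M borel Ee) \<partial>M)"
    apply (rule nn_integral_distr[OF idm])
    apply (rule Y.borel_measurable_nn_integral)
    using F by simp
  finally show ?thesis .
qed

lemma indep_exp_integral:
  fixes MG :: "'a measure" and Ee :: "'a \<Rightarrow> real" and h :: "'a \<Rightarrow> ennreal" and c :: "'a \<Rightarrow> real"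
  assumes P: "prob_space M"
    and sub: "sets MG \<subseteq> sets M" and sp: "space MG = space M"
    and ind: "prob_space.indep_set M (sets MG) {Ee -` A \<inter> space M | A. A \<in> sets (borel :: real measure)}"
    and D: "distributed M lborel Ee (exponential_density 1)"
    and hm: "h \<in> borel_measurable MG" and cm: "c \<in> borel_measurable MG"
    and c0: "\<And>\<omega>. \<omega> \<in> space M \<Longrightarrow> 0 \<le> c \<omega>"
  shows "(\<integral>\<^sup>+\<omega>. h \<omega> * indicator {c \<omega><..} (Ee \<omega>) \<partial>M) = (\<integral>\<^sup>+\<omega>. h \<omega> * ennreal (exp (- c \<omega>)) \<partial>M)"
proof -
  interpret prob_space M by fact
  have Em: "Ee \<in> borel_measurable M"
    using distributed_measurable[OF D] by simp
  let ?F = "\<lambda>p. h (fst p) * indicator {c (fst p)<..} (snd p) :: ennreal"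
  have Fm: "?F \<in> borel_measurable (MG \<Otimes>\<^sub>M borel)"
  proof -
    have "?F = (\<lambda>p. h (fst p) * (if c (fst p) < snd p then 1 else 0))"
      by (auto simp: fun_eq_iff indicator_def)
    also have "\<dots> \<in> borel_measurable (MG \<Otimes>\<^sub>M borel)"
      using hm cm by measurable
    finally show ?thesis .
  qed
  have "(\<integral>\<^sup>+\<omega>. h \<omega> * indicator {c \<omega><..} (Ee \<omega>) \<partial>M) = (\<integral>\<^sup>+\<omega>. ?F (\<omega>, Ee \<omega>) \<partial>M)" by simp
  also have "\<dots> = (\<integral>\<^sup>+\<omega>. (\<integral>\<^sup>+e. ?F (\<omega>, e) \<partial>distr M borel Ee) \<partial>M)"
    by (rule indep_nn_integral[OF P sub sp ind Em Fm])
  also have "\<dots> = (\<integral>\<^sup>+\<omega>. h \<omega> * ennreal (exp (- c \<omega>)) \<partial>M)"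
  proof (rule nn_integral_cong)
    fix \<omega> assume w: "\<omega> \<in> space M"
    have "(\<integral>\<^sup>+e. ?F (\<omega>, e) \<partial>distr M borel Ee) = h \<omega> * emeasure (distr M borel Ee) {c \<omega><..}"
      by (simp add: nn_integral_cmult_indicator)
    also have "emeasure (distr M borel Ee) {c \<omega><..} = emeasure M (Ee -` {c \<omega><..} \<inter> space M)"
      using Em by (simp add: emeasure_distr)
    also have "Ee -` {c \<omega><..} \<inter> space M = {x \<in> space M. c \<omega> < Ee x}" by auto
    also have "emeasure M \<dots> = ennreal (exp (- c \<omega>))"
      using exponential_distributedD_gt[OF D c0[OF w]] by (simp add: emeasure_eq_measure)
    finally show "(\<integral>\<^sup>+e. ?F (\<omega>, e) \<partial>distr M borel Ee) = h \<omega> * ennreal (exp (- c \<omega>))" .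
  qed
  finally show ?thesis .
qed


definition Lam :: "(real \<Rightarrow> real) \<Rightarrow> real \<Rightarrow> ennreal" where
  "Lam g t = (\<integral>\<^sup>+ s. ennreal (g s) * indicator {0..t} s \<partial>lborel)"

lemma Lam_split:
  assumes gm: "g \<in> borel_measurable borel" and "0 \<le> a" "a \<le> b"
  shows "Lam g b = Lam g a + (\<integral>\<^sup>+ s. ennreal (g s) * indicator {a<..b} s \<partial>lborel)"
proof -
  have "\<And>s. ennreal (g s) * indicator {0..b} s = ennreal (g s) * indicator {0..a} s + ennreal (g s) * indicator {a<..b} s"
    using assms(2,3) by (auto simp: indicator_def)
  then have "Lam g b = (\<integral>\<^sup>+ s. ennreal (g s) * indicator {0..a} s + ennreal (g s) * indicator {a<..b} s \<partial>lborel)"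
    unfolding Lam_def by simp
  also have "\<dots> = Lam g a + (\<integral>\<^sup>+ s. ennreal (g s) * indicator {a<..b} s \<partial>lborel)"
    unfolding Lam_def using gm by (intro nn_integral_add) auto
  finally show ?thesis .
qed

lemma int_bounds:
  assumes gm: "g \<in> borel_measurable borel" and "a \<le> b" "0 \<le> lo"
    and lo: "\<And>s. a < s \<Longrightarrow> s < b \<Longrightarrow> lo \<le> g s" and hi: "\<And>s. a < s \<Longrightarrow> s < b \<Longrightarrow> g s \<le> hi"
  shows "ennreal (lo * (b - a)) \<le> (\<integral>\<^sup>+ s. ennreal (g s) * indicator {a<..b} s \<partial>lborel)"
    and "(\<integral>\<^sup>+ s. ennreal (g s) * indicator {a<..b} s \<partial>lborel) \<le> ennreal (hi * (b - a))"
proof -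
  have hi0: "0 \<le> hi" if "a < b"
  proof -
    have "lo \<le> g ((a+b)/2)" "g ((a+b)/2) \<le> hi" using lo hi that by auto
    then show ?thesis using \<open>0 \<le> lo\<close> by linarith
  qed
  have ae: "AE s in lborel. s \<noteq> b" by (rule AE_lborel_singleton)
  have "ennreal (lo * (b - a)) = (\<integral>\<^sup>+ s. ennreal lo * indicator {a<..b} s \<partial>lborel)"
    using assms(2,3) by (simp add: nn_integral_cmult_indicator ennreal_mult)
  also have "\<dots> \<le> (\<integral>\<^sup>+ s. ennreal (g s) * indicator {a<..b} s \<partial>lborel)"
    using ae by (intro nn_integral_mono_AE) (auto simp: indicator_def intro!: ennreal_leI lo elim!: eventually_mono)
  finally show "ennreal (lo * (b - a)) \<le> (\<integral>\<^sup>+ s. ennreal (g s) * indicator {a<..b} s \<partial>lborel)" .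
  show "(\<integral>\<^sup>+ s. ennreal (g s) * indicator {a<..b} s \<partial>lborel) \<le> ennreal (hi * (b - a))"
  proof (cases "a < b")
    case True
    have "(\<integral>\<^sup>+ s. ennreal (g s) * indicator {a<..b} s \<partial>lborel) \<le> (\<integral>\<^sup>+ s. ennreal hi * indicator {a<..b} s \<partial>lborel)"
      using ae by (intro nn_integral_mono_AE) (auto simp: indicator_def intro!: ennreal_leI hi elim!: eventually_mono)
    also have "\<dots> = ennreal (hi * (b - a))"
      using assms(2) hi0[OF True] by (simp add: nn_integral_cmult_indicator ennreal_mult)
    finally show ?thesis .
  next
    case False
    then have "{a<..b} = {}" by auto
    then show ?thesis by simp
  qed
qed

lemma Lam_0: "Lam g 0 = 0"
proof -
  have "Lam g 0 = (\<integral>\<^sup>+ s. 0 \<partial>(lborel::real measure))"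
    unfolding Lam_def
    by (rule nn_integral_cong_AE) (use AE_lborel_singleton[of "0::real"] in \<open>auto simp: indicator_def elim!: eventually_mono\<close>)
  then show ?thesis by simp
qed

definition LL :: "(real \<Rightarrow> real) \<Rightarrow> real \<Rightarrow> real" where
  "LL g t = enn2real (Lam g t)"

lemma LL_props:
  assumes gm: "g \<in> borel_measurable borel" and gb: "\<And>s. 0 \<le> g s" "\<And>s. g s \<le> K"
    and ab: "0 \<le> a" "a \<le> b" and "0 \<le> lo"
    and lo: "\<And>s. a < s \<Longrightarrow> s < b \<Longrightarrow> lo \<le> g s" and hi: "\<And>s. a < s \<Longrightarrow> s < b \<Longrightarrow> g s \<le> hi"
  shows "lo * (b - a) \<le> LL g b - LL g a" and "LL g b - LL g a \<le> hi * (b - a)"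
    and "Lam g b = ennreal (LL g b)" and "0 \<le> LL g b"
proof -
  have fin: "Lam g t = ennreal (LL g t)" if "0 \<le> t" for t
  proof -
    have "Lam g t = Lam g 0 + (\<integral>\<^sup>+ s. ennreal (g s) * indicator {0<..t} s \<partial>lborel)"
      using Lam_split[OF gm, of 0 t] that by simp
    also have "\<dots> \<le> ennreal (K * (t - 0))"
      unfolding Lam_0 using int_bounds(2)[OF gm that order_refl, of K] gb by auto
    finally have "Lam g t < \<infinity>" by (simp add: order_le_less_trans)
    then show ?thesis unfolding LL_def by (simp add: less_top)
  qed
  let ?I = "\<integral>\<^sup>+ s. ennreal (g s) * indicator {a<..b} s \<partial>lborel"
  have I1: "ennreal (lo * (b - a)) \<le> ?I" and I2: "?I \<le> ennreal (hi * (b - a))"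
    using int_bounds[OF gm ab(2) \<open>0 \<le> lo\<close> lo hi] by auto
  define J where "J = enn2real ?I"
  have Ifin: "?I = ennreal J"
    unfolding J_def using I2 by (metis ennreal_enn2real ennreal_less_top order_le_less_trans)
  have J0: "0 \<le> J" unfolding J_def by simp
  have "ennreal (LL g b) = ennreal (LL g a) + ennreal J"
    using Lam_split[OF gm ab] fin[of a] fin[of b] ab unfolding Ifin by simp
  also have "\<dots> = ennreal (LL g a + J)"
    by (rule ennreal_plus[symmetric]) (auto simp: LL_def J0)
  finally have eq: "LL g b = LL g a + J"
    by (subst (asm) ennreal_inj) (auto simp: LL_def J0)
  have h1: "lo * (b - a) \<le> J"
    using I1 unfolding Ifin using J0 by (simp add: ennreal_le_iff)
  have hb: "0 \<le> hi * (b - a)"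
  proof (cases "a < b")
    case True
    have "lo \<le> g ((a+b)/2)" "g ((a+b)/2) \<le> hi" using lo hi True by auto
    then show ?thesis using \<open>0 \<le> lo\<close> True by simp
  qed (use ab in simp)
  have h2: "J \<le> hi * (b - a)"
    using I2 hb unfolding Ifin by simp
  show "lo * (b - a) \<le> LL g b - LL g a" using eq h1 by simp
  show "LL g b - LL g a \<le> hi * (b - a)" using eq h2 by simp
  show "Lam g b = ennreal (LL g b)" using fin ab by simp
  show "0 \<le> LL g b" unfolding LL_def by simp
qed


lemma theta_char:
  fixes L :: "real \<Rightarrow> real" and K e :: real
  assumes L0: "L 0 = 0" and mono: "\<And>a b. 0 \<le> a \<Longrightarrow> a \<le> b \<Longrightarrow> L a \<le> L b"
    and lip: "\<And>a b. 0 \<le> a \<Longrightarrow> a \<le> b \<Longrightarrow> L b - L a \<le> K * (b - a)" and K: "0 \<le> K"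
    and e: "0 \<le> e" and unb: "\<exists>t\<ge>0. e \<le> L t"
  shows "Inf {ennreal t | t. 0 \<le> t \<and> ennreal (L t) = ennreal e} \<noteq> \<infinity>"
    and "\<And>s. 0 \<le> s \<Longrightarrow> ennreal s < Inf {ennreal t | t. 0 \<le> t \<and> ennreal (L t) = ennreal e} \<longleftrightarrow> L s < e"
proof -
  let ?S = "{ennreal t | t. 0 \<le> t \<and> ennreal (L t) = ennreal e}"
  have Lnn: "0 \<le> L t" if "0 \<le> t" for t using mono[OF order_refl that] L0 by simp
  have eqiff: "ennreal (L t) = ennreal e \<longleftrightarrow> L t = e" if "0 \<le> t" for t
    using Lnn[OF that] e by (simp add: ennreal_inj)
  have cont: "continuous_on {a..b} L" if "0 \<le> a" for a b
  proof -
    have "K-lipschitz_on {a..b} L"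
    proof (rule lipschitz_onI)
      fix x y assume xy: "x \<in> {a..b}" "y \<in> {a..b}"
      show "dist (L x) (L y) \<le> K * dist x y"
      proof (cases "x \<le> y")
        case True
        have *: "L x \<le> L y" "L y - L x \<le> K * (y - x)" using lip[of x y] mono[of x y] xy that True by auto
        have "dist (L x) (L y) = L y - L x" "dist x y = y - x" using * True by (simp_all add: dist_real_def)
        then show ?thesis using * by simp
      next
        case False
        have *: "L y \<le> L x" "L x - L y \<le> K * (x - y)" using lip[of y x] mono[of y x] xy that False by auto
        have "dist (L x) (L y) = L x - L y" "dist x y = x - y" using * False by (simp_all add: dist_real_def)
        then show ?thesis using * by simp
      qed
    qed (rule K)
    then show ?thesis by (rule lipschitz_on_continuous_on)
  qed
  have ivt: "\<exists>t. 0 \<le> t \<and> t \<le> b \<and> L t = e" if "e \<le> L b" "0 \<le> b" for b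
    using IVT'[of L 0 e b, OF _ that(1) that(2) cont[of 0 b]] L0 e by auto
  obtain t1 where t1: "0 \<le> t1" "e \<le> L t1" using unb by auto
  obtain t where t: "0 \<le> t" "L t = e" using ivt[OF t1(2) t1(1)] by auto
  have "Inf ?S \<le> ennreal t" using t eqiff[of t] by (intro Inf_lower) auto
  then show "Inf ?S \<noteq> \<infinity>"
  proof (intro notI)
    assume "Inf ?S \<le> ennreal t" "Inf ?S = \<infinity>"
    then have "\<infinity> \<le> ennreal t" by simp
    then show False by (simp add: top_unique)
  qed
  fix s :: real assume s: "0 \<le> s"
  show "ennreal s < Inf ?S \<longleftrightarrow> L s < e"
  proof
    assume "ennreal s < Inf ?S"
    show "L s < e"
    proof (rule ccontr)
      assume "\<not> L s < e"
      then obtain u where u: "0 \<le> u" "u \<le> s" "L u = e" using ivt[of s] s by auto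
      then have "Inf ?S \<le> ennreal u" using eqiff[of u] by (intro Inf_lower) auto
      also have "\<dots> \<le> ennreal s" using u by (simp add: ennreal_leI)
      finally show False using \<open>ennreal s < Inf ?S\<close> by simp
    qed
  next
    assume Ls: "L s < e"
    define \<delta> where "\<delta> = (e - L s) / (K + 1)"
    have d0: "0 < \<delta>" unfolding \<delta>_def using Ls K by simp
    have Kd: "K * \<delta> < e - L s"
    proof -
      have "K * \<delta> = (e - L s) * (K / (K + 1))" unfolding \<delta>_def using K by (simp add: field_simps)
      also have "\<dots> < (e - L s) * 1" using Ls K by (intro mult_strict_left_mono) auto
      finally show ?thesis by simp
    qed
    have "ennreal (s + \<delta>) \<le> Inf ?S"
    proof (rule Inf_greatest)
      fix x assume "x \<in> ?S"
      then obtain u where u: "x = ennreal u" "0 \<le> u" "L u = e" using eqiff by auto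
      have "s + \<delta> \<le> u"
      proof (rule ccontr)
        assume "\<not> s + \<delta> \<le> u"
        show False
        proof (cases "u \<le> s")
          case True then show False using mono[OF u(2) True] u Ls by simp
        next
          case False
          have "L u - L s \<le> K * (u - s)" using lip[of s u] s False by simp
          also have "\<dots> \<le> K * \<delta>" using K \<open>\<not> s + \<delta> \<le> u\<close> by (intro mult_left_mono) auto
          finally show False using Kd u by simp
        qed
      qed
      then show "ennreal (s + \<delta>) \<le> x" using u by (simp add: ennreal_leI)
    qed
    moreover have "ennreal s < ennreal (s + \<delta>)" using d0 s by (simp add: ennreal_less_iff)
    ultimately show "ennreal s < Inf ?S" by simp
  qed
qed


lemma tau_le:
  fixes f :: "real \<Rightarrow> real" and i t :: real
  assumes mono: "mono_on {0..} f" and rc: "\<forall>t\<ge>0. continuous (at_right t) f" and t: "0 \<le> t"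
  shows "Inf {ennreal u | u. 0 \<le> u \<and> f u \<ge> i} \<le> ennreal t \<longleftrightarrow> i \<le> f t"
proof
  assume "i \<le> f t"
  then show "Inf {ennreal u | u. 0 \<le> u \<and> f u \<ge> i} \<le> ennreal t"
    using t by (intro Inf_lower) auto
next
  assume le: "Inf {ennreal u | u. 0 \<le> u \<and> f u \<ge> i} \<le> ennreal t"
  show "i \<le> f t"
  proof (rule ccontr)
    assume "\<not> i \<le> f t"
    then have ft: "f t < i" by simp
    have "(f \<longlongrightarrow> f t) (at_right t)" using rc t by (simp add: continuous_within)
    from order_tendstoD(2)[OF this ft]
    have "eventually (\<lambda>s. f s < i) (at_right t)" .
    then obtain b where b: "t < b" "\<And>s. t < s \<Longrightarrow> s < b \<Longrightarrow> f s < i"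
      by (auto simp: eventually_at_right_field)
    have "ennreal b \<le> Inf {ennreal u | u. 0 \<le> u \<and> f u \<ge> i}"
    proof (rule Inf_greatest)
      fix x assume "x \<in> {ennreal u | u. 0 \<le> u \<and> f u \<ge> i}"
      then obtain u where u: "x = ennreal u" "0 \<le> u" "i \<le> f u" by auto
      have "b \<le> u"
      proof (rule ccontr)
        assume "\<not> b \<le> u"
        show False
        proof (cases "u \<le> t")
          case True
          then have "f u \<le> f t" using mono u(2) t by (auto intro: mono_onD)
          then show False using u ft by simp
        next
          case False
          then show False using b(2)[of u] \<open>\<not> b \<le> u\<close> u by simp
        qed
      qed
      then show "ennreal b \<le> x" using u by (simp add: ennreal_leI)
    qed
    moreover have "ennreal t < ennreal b" using b t by (simp add: ennreal_less_iff)
    ultimately show False using le by simp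
  qed
qed


lemma MG_props:
  assumes rc: "right_continuous_filtration M G"
  shows "space (G_infty M G) = space M" and "sets (G_infty M G) \<subseteq> sets M"
    and "\<And>t. 0 \<le> t \<Longrightarrow> sets (G t) \<subseteq> sets (G_infty M G)"
proof -
  have sp: "\<And>t. space (G t) = space M" and ss: "\<And>t. sets (G t) \<subseteq> sets M"
    using rc unfolding right_continuous_filtration_def by auto
  have P: "(\<Union>t\<in>{0..}. sets (G t)) \<subseteq> Pow (space M)"
    using sets.sets_into_space sp by fastforce
  show "space (G_infty M G) = space M" unfolding G_infty_def using P by (simp add: space_measure_of)
  have S: "sets (G_infty M G) = sigma_sets (space M) (\<Union>t\<in>{0..}. sets (G t))"
    unfolding G_infty_def using P by (simp add: sets_measure_of)
  show "sets (G_infty M G) \<subseteq> sets M" unfolding S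
    by (rule sets.sigma_sets_subset) (use ss in auto)
  fix t :: real assume "0 \<le> t"
  then show "sets (G t) \<subseteq> sets (G_infty M G)" unfolding S by (auto intro: sigma_sets.Basic)
qed

lemma meas_sub:
  assumes "space A = space B" "sets A \<subseteq> sets B" "f \<in> measurable A N"
  shows "f \<in> measurable B N"
proof (rule measurableI)
  fix x assume "x \<in> space B" then show "f x \<in> space N" using assms measurable_space by metis
next
  fix S assume "S \<in> sets N"
  then have "f -` S \<inter> space A \<in> sets A" using assms(3) by (rule measurable_sets[rotated])
  then show "f -` S \<inter> space B \<in> sets B" using assms(1,2) by auto
qed

lemma stopping_meas:
  assumes rc: "right_continuous_filtration M G" and st: "G_stopping_time G \<sigma>"
  shows "\<sigma> \<in> borel_measurable (G_infty M G)"
proof (rule borel_measurableI_le)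
  fix y :: ennreal
  have sp: "\<And>t. space (G t) = space M"
    using rc unfolding right_continuous_filtration_def by auto
  show "{x \<in> space (G_infty M G). \<sigma> x \<le> y} \<in> sets (G_infty M G)"
  proof (cases y rule: ennreal_cases)
    case (real t)
    have "{x \<in> space (G t). \<sigma> x \<le> ennreal t} \<in> sets (G t)"
      using st real unfolding G_stopping_time_def pred_def by auto
    then show ?thesis using MG_props[OF rc] sp real by auto
  next
    case top
    then show ?thesis by simp
  qed
qed

lemma Xt_meas:
  assumes prog: "progressive G X" and t: "0 \<le> t"
  shows "X t \<in> borel_measurable (G t)"
proof -
  have "(\<lambda>p. X (fst p) (snd p)) \<in> borel_measurable (restrict_space lborel {0..t} \<Otimes>\<^sub>M G t)"
    using prog t unfolding progressive_def by auto
  from measurable_compose_Pair1[OF _ this, of t] t show ?thesis by simp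
qed

lemma int_meas:
  fixes f :: "real \<Rightarrow> 'a \<Rightarrow> ennreal"
  assumes "(\<lambda>p. f (fst p) (snd p)) \<in> borel_measurable (restrict_space lborel {0..t} \<Otimes>\<^sub>M N)"
  shows "(\<lambda>\<omega>. \<integral>\<^sup>+ s\<in>{0..t}. f s \<omega> \<partial>lborel) \<in> borel_measurable N"
proof -
  interpret S: sigma_finite_measure "restrict_space lborel {0..t::real}"
    by (rule sigma_finite_measure_restrict_space) (auto intro: lborel.sigma_finite_measure_axioms)
  have "(\<lambda>\<omega>. \<integral>\<^sup>+ s. f s \<omega> \<partial>restrict_space lborel {0..t}) \<in> borel_measurable N"
  proof (rule S.borel_measurable_nn_integral)
    have "(\<lambda>(x,y). (\<lambda>p. f (fst p) (snd p)) (y, x)) \<in> borel_measurable (N \<Otimes>\<^sub>M restrict_space lborel {0..t})"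
      using measurable_pair_swap[OF assms] .
    then show "(\<lambda>(\<omega>, s). f s \<omega>) \<in> borel_measurable (N \<Otimes>\<^sub>M restrict_space lborel {0..t})"
      by (simp add: case_prod_beta')
  qed
  then show ?thesis by (simp add: nn_integral_restrict_space)
qed


lemma lim_gt1:
  fixes f :: "real \<Rightarrow> real"
  assumes mono: "mono_on {0..} f" and lim: "Lim at_top (\<lambda>t. ereal (f t)) > 1"
  shows "\<exists>t\<ge>0. 1 < f t"
proof -
  let ?l = "SUP t\<in>{0..}. ereal (f t)"
  have "((\<lambda>t. ereal (f t)) \<longlongrightarrow> ?l) at_top"
  proof (rule order_tendstoI)
    fix a assume "a < ?l"
    then obtain t0 where t0: "t0 \<in> {0..}" "a < ereal (f t0)" by (auto simp: less_SUP_iff)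
    have "\<forall>t\<ge>t0. a < ereal (f t)"
    proof (intro allI impI)
      fix t assume "t0 \<le> t"
      then have "f t0 \<le> f t" using mono t0 by (auto intro: mono_onD)
      then show "a < ereal (f t)" using t0 by (meson ereal_less_eq(3) order_less_le_trans)
    qed
    then show "eventually (\<lambda>t. a < ereal (f t)) at_top"
      by (auto simp: eventually_at_top_linorder)
  next
    fix a assume "?l < a"
    have "\<forall>t\<ge>0. ereal (f t) < a"
    proof (intro allI impI)
      fix t :: real assume "0 \<le> t"
      then have "ereal (f t) \<le> ?l" by (intro SUP_upper) auto
      then show "ereal (f t) < a" using \<open>?l < a\<close> by simp
    qed
    then show "eventually (\<lambda>t. ereal (f t) < a) at_top"
      by (auto simp: eventually_at_top_linorder)
  qed
  then have "Lim at_top (\<lambda>t. ereal (f t)) = ?l" by (rule tendsto_Lim[rotated]) simp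
  then have "1 < ?l" using lim by simp
  then obtain t where "t \<in> {0..}" "1 < ereal (f t)" by (auto simp: less_SUP_iff)
  then show ?thesis by auto
qed


definition gam :: "real \<Rightarrow> real \<Rightarrow> real \<Rightarrow> real" where
  "gam r i x = max (r - i + max (min x 1) 0) 0"

lemma gam_mono: "x \<le> y \<Longrightarrow> gam r i x \<le> gam r i y"
  unfolding gam_def by (auto simp: max_def min_def)

lemma gam_nn: "0 \<le> gam r i x" unfolding gam_def by simp

lemma gam_le: "0 < r \<Longrightarrow> 0 \<le> i \<Longrightarrow> gam r i x \<le> r + 1"
  unfolding gam_def by (auto simp: max_def min_def)

lemma gam_below: "0 < r \<Longrightarrow> 0 \<le> i \<Longrightarrow> i \<le> 1 \<Longrightarrow> x < i \<Longrightarrow> gam r i x \<le> r"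
  unfolding gam_def by (auto simp: max_def min_def)

lemma gam_above: "0 < r \<Longrightarrow> 0 \<le> i \<Longrightarrow> i \<le> 1 \<Longrightarrow> i \<le> x \<Longrightarrow> r \<le> gam r i x"
  unfolding gam_def by (auto simp: max_def min_def)

lemma gam_top: "0 < r \<Longrightarrow> i \<le> 1 \<Longrightarrow> 1 \<le> x \<Longrightarrow> r \<le> gam r i x"
  unfolding gam_def by (auto simp: max_def min_def)

context
  fixes f :: "real \<Rightarrow> real" and r i :: real
  assumes mono: "mono_on {0..} f" and r0: "0 < r" and i0: "0 \<le> i" and i1: "i \<le> 1"
begin

definition "gp s = gam r i (f (max s 0))"
definition "LG = LL gp"

lemma gp_mono: "mono gp"
proof (rule monoI)
  fix a b :: real assume "a \<le> b"
  then have "f (max a 0) \<le> f (max b 0)"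
    using mono_onD[OF mono, of "max a 0" "max b 0"] by auto
  then show "gp a \<le> gp b" unfolding gp_def by (rule gam_mono)
qed

lemma gp_meas: "gp \<in> borel_measurable borel"
  by (rule borel_measurable_mono[OF gp_mono])

lemma gp_nn: "0 \<le> gp s" unfolding gp_def by (rule gam_nn)

lemma gp_le: "gp s \<le> r + 1" unfolding gp_def using r0 i0 by (rule gam_le)

lemma LGp:
  assumes "0 \<le> a" "a \<le> b" "0 \<le> lo"
    "\<And>s. a < s \<Longrightarrow> s < b \<Longrightarrow> lo \<le> gp s" "\<And>s. a < s \<Longrightarrow> s < b \<Longrightarrow> gp s \<le> hi"
  shows "lo * (b - a) \<le> LG b - LG a" "LG b - LG a \<le> hi * (b - a)"
  unfolding LG_def using LL_props(1,2)[OF gp_meas gp_nn gp_le assms] by auto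

lemma LG_mono: "0 \<le> a \<Longrightarrow> a \<le> b \<Longrightarrow> LG a \<le> LG b"
  using LGp(1)[of a b 0 "r + 1"] gp_nn gp_le by auto

lemma LG_lip: "0 \<le> a \<Longrightarrow> a \<le> b \<Longrightarrow> LG b - LG a \<le> (r + 1) * (b - a)"
  using LGp(2)[of a b 0 "r + 1"] gp_nn gp_le by auto

lemma LG0: "LG 0 = 0" unfolding LG_def LL_def Lam_0 by simp

lemma LG_nn: "0 \<le> LG t" unfolding LG_def LL_def by simp

lemma Lam_eq:
  assumes t: "0 \<le> t"
  shows "(\<integral>\<^sup>+ s\<in>{0..t}. ennreal (gam r i (f s)) \<partial>lborel) = ennreal (LG t)"
proof -
  have "(\<integral>\<^sup>+ s\<in>{0..t}. ennreal (gam r i (f s)) \<partial>lborel) = Lam gp t"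
    unfolding Lam_def gp_def by (intro nn_integral_cong) (auto simp: indicator_def max_def)
  also have "\<dots> = ennreal (LG t)"
    unfolding LG_def using LL_props(3)[OF gp_meas gp_nn gp_le order_refl t order_refl, of "r + 1"] gp_nn gp_le by auto
  finally show ?thesis .
qed

lemma unb:
  assumes big: "\<exists>t\<ge>0. 1 < f t" and e: "0 \<le> e"
  shows "\<exists>t\<ge>0. e \<le> LG t"
proof -
  obtain t0 where t0: "0 \<le> t0" "1 < f t0" using big by auto
  have bg: "r \<le> gp s" if "t0 < s" for s
  proof -
    have "f t0 \<le> f s" using mono_onD[OF mono, of t0 s] t0 that by auto
    then show ?thesis unfolding gp_def using that t0 r0 i1 by (intro gam_top) auto
  qed
  have "r * (t0 + e / r - t0) \<le> LG (t0 + e / r) - LG t0"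
    using LGp(1)[OF t0(1), of "t0 + e / r" r "r + 1"] bg gp_le e r0 by auto
  then have "e \<le> LG (t0 + e / r)" using r0 LG_nn[of t0] by simp
  then show ?thesis using t0 e r0 by (intro exI[of _ "t0 + e / r"]) auto
qed

lemma theta:
  assumes big: "\<exists>t\<ge>0. 1 < f t" and e: "0 \<le> e"
  shows "Inf {ennreal t | t. 0 \<le> t \<and> (\<integral>\<^sup>+ s\<in>{0..t}. ennreal (gam r i (f s)) \<partial>lborel) = ennreal e} \<noteq> \<infinity>"
    and "\<And>s. 0 \<le> s \<Longrightarrow> ennreal s < Inf {ennreal t | t. 0 \<le> t \<and> (\<integral>\<^sup>+ s\<in>{0..t}. ennreal (gam r i (f s)) \<partial>lborel) = ennreal e} \<longleftrightarrow> LG s < e"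
proof -
  have S: "{ennreal t | t. 0 \<le> t \<and> (\<integral>\<^sup>+ s\<in>{0..t}. ennreal (gam r i (f s)) \<partial>lborel) = ennreal e}
    = {ennreal t | t. 0 \<le> t \<and> ennreal (LG t) = ennreal e}"
    using Lam_eq by metis
  note tc = theta_char[of LG "r + 1" e, OF LG0 LG_mono LG_lip _ e unb[OF big e]]
  show "Inf {ennreal t | t. 0 \<le> t \<and> (\<integral>\<^sup>+ s\<in>{0..t}. ennreal (gam r i (f s)) \<partial>lborel) = ennreal e} \<noteq> \<infinity>"
    unfolding S using tc(1) r0 by simp
  fix s :: real assume "0 \<le> s"
  then show "ennreal s < Inf {ennreal t | t. 0 \<le> t \<and> (\<integral>\<^sup>+ s\<in>{0..t}. ennreal (gam r i (f s)) \<partial>lborel) = ennreal e} \<longleftrightarrow> LG s < e"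
    unfolding S using tc(2) r0 by simp
qed


lemma opt_path:
  assumes big: "\<exists>t\<ge>0. 1 < f t" and rc: "\<forall>t\<ge>0. continuous (at_right t) f"
  defines "tf \<equiv> Inf {ennreal u | u. 0 \<le> u \<and> f u \<ge> i}"
  shows "tf = ennreal (enn2real tf)"
    and "\<And>s. 0 \<le> s \<Longrightarrow> r * s - LG s \<le> r * enn2real tf - LG (enn2real tf)"
proof -
  have tl: "\<And>t. 0 \<le> t \<Longrightarrow> tf \<le> ennreal t \<longleftrightarrow> i \<le> f t"
    unfolding tf_def using tau_le[OF mono rc] by blast
  obtain t0 where t0: "0 \<le> t0" "1 < f t0" using big by auto
  then have "tf \<le> ennreal t0" using tl[OF t0(1)] i1 by simp
  then have "tf \<noteq> \<top>" using ennreal_less_top[of t0] by (auto simp: top_unique)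
  then show tfe: "tf = ennreal (enn2real tf)" by (metis ennreal_enn2real less_top)
  define T where "T = enn2real tf"
  have T0: "0 \<le> T" unfolding T_def by simp
  have fT: "i \<le> f T" using tl[OF T0] tfe unfolding T_def by simp
  have below: "f u < i" if "0 \<le> u" "u < T" for u
  proof (rule ccontr)
    assume "\<not> f u < i"
    then have "tf \<le> ennreal u" using tl[OF that(1)] by simp
    then have "T \<le> u" unfolding T_def using tfe that(1)
      by (metis ennreal_le_iff)
    then show False using that by simp
  qed
  fix s :: real assume s: "0 \<le> s"
  show "r * s - LG s \<le> r * enn2real tf - LG (enn2real tf)"
  proof (cases "s \<le> T")
    case True
    have "LG T - LG s \<le> r * (T - s)"
    proof (rule LGp(2)[OF s True order_refl])
      fix u assume u: "s < u" "u < T"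
      show "0 \<le> gp u" by (rule gp_nn)
      have "gp u = gam r i (f u)" unfolding gp_def using u s by (simp add: max_def)
      also have "\<dots> \<le> r" using below[of u] u s r0 i0 i1 by (intro gam_below) auto
      finally show "gp u \<le> r" .
    qed
    then show ?thesis by (simp add: algebra_simps T_def)
  next
    case False
    have "r * (s - T) \<le> LG s - LG T"
    proof (rule LGp(1)[OF T0 _ ])
      show "T \<le> s" using False by simp
      show "0 \<le> r" using r0 by simp
      fix u assume u: "T < u" "u < s"
      have "f T \<le> f u" using mono_onD[OF mono, of T u] T0 u by auto
      then have "gp u = gam r i (f u)" "i \<le> f u" unfolding gp_def using u T0 fT by (auto simp: max_def)
      then show "r \<le> gp u" using r0 i0 i1 gam_above by simp
      show "gp u \<le> r + 1" by (rule gp_le)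
    qed
    then show ?thesis by (simp add: algebra_simps T_def)
  qed
qed

end


lemma cc_meas:
  fixes Lf :: "'a \<Rightarrow> real \<Rightarrow> real" and v :: "'a \<Rightarrow> ennreal"
  assumes Lm: "\<And>t. 0 \<le> t \<Longrightarrow> (\<lambda>\<omega>. Lf \<omega> t) \<in> borel_measurable N" and vm: "v \<in> borel_measurable N"
    and mono: "\<And>\<omega> a b. \<omega> \<in> space N \<Longrightarrow> 0 \<le> a \<Longrightarrow> a \<le> b \<Longrightarrow> Lf \<omega> a \<le> Lf \<omega> b"
    and lip: "\<And>\<omega> a b. \<omega> \<in> space N \<Longrightarrow> 0 \<le> a \<Longrightarrow> a \<le> b \<Longrightarrow> Lf \<omega> b - Lf \<omega> a \<le> K * (b - a)"
    and K: "0 \<le> K"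
  shows "(\<lambda>\<omega>. Lf \<omega> (enn2real (v \<omega>))) \<in> borel_measurable N"
proof (rule borel_measurable_iff_less[THEN iffD2], intro allI)
  fix a :: real
  let ?Q = "\<rat> \<inter> {0::real..}"
  have eq: "{\<omega> \<in> space N. Lf \<omega> (enn2real (v \<omega>)) < a} =
    (\<Union>q\<in>?Q. {\<omega> \<in> space N. enn2real (v \<omega>) < q} \<inter> {\<omega> \<in> space N. Lf \<omega> q < a})"
  proof (intro set_eqI iffI)
    fix \<omega> assume "\<omega> \<in> {\<omega> \<in> space N. Lf \<omega> (enn2real (v \<omega>)) < a}"
    then have w: "\<omega> \<in> space N" and lt: "Lf \<omega> (enn2real (v \<omega>)) < a" by auto
    define s where "s = enn2real (v \<omega>)"
    have s0: "0 \<le> s" unfolding s_def by simp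
    define \<delta> where "\<delta> = (a - Lf \<omega> s) / (K + 1)"
    have d0: "0 < \<delta>" unfolding \<delta>_def using lt K s_def by simp
    obtain q where q: "q \<in> \<rat>" "s < q" "q < s + \<delta>" using Rats_dense_in_real[of s "s + \<delta>"] d0 by auto
    have "Lf \<omega> q - Lf \<omega> s \<le> K * (q - s)" using lip[OF w s0, of q] q by simp
    also have "\<dots> \<le> K * \<delta>" using q K by (intro mult_left_mono) auto
    also have "\<dots> < a - Lf \<omega> s"
    proof -
      have "K * \<delta> = (a - Lf \<omega> s) * (K / (K + 1))" unfolding \<delta>_def using K by (simp add: field_simps)
      also have "\<dots> < (a - Lf \<omega> s) * 1" using lt K s_def by (intro mult_strict_left_mono) auto
      finally show ?thesis by simp
    qed
    finally have "Lf \<omega> q < a" by simp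
    moreover have "q \<in> ?Q" using q s0 by auto
    ultimately show "\<omega> \<in> (\<Union>q\<in>?Q. {\<omega> \<in> space N. enn2real (v \<omega>) < q} \<inter> {\<omega> \<in> space N. Lf \<omega> q < a})"
      using q(2) w unfolding s_def by blast
  next
    fix \<omega> assume "\<omega> \<in> (\<Union>q\<in>?Q. {\<omega> \<in> space N. enn2real (v \<omega>) < q} \<inter> {\<omega> \<in> space N. Lf \<omega> q < a})"
    then obtain q where w: "\<omega> \<in> space N" and q: "enn2real (v \<omega>) < q" "Lf \<omega> q < a" by auto
    have "Lf \<omega> (enn2real (v \<omega>)) \<le> Lf \<omega> q" using mono[OF w _ less_imp_le[OF q(1)]] by simp
    then show "\<omega> \<in> {\<omega> \<in> space N. Lf \<omega> (enn2real (v \<omega>)) < a}" using w q by auto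
  qed
  have cQ: "countable ?Q" using countable_rat by (rule countable_subset[rotated]) auto
  have "(\<Union>q\<in>?Q. {\<omega> \<in> space N. enn2real (v \<omega>) < q} \<inter> {\<omega> \<in> space N. Lf \<omega> q < a}) \<in> sets N"
  proof (rule sets.countable_UN''[OF cQ])
    fix q assume "q \<in> ?Q"
    then have q0: "0 \<le> q" by auto
    have [measurable]: "(\<lambda>\<omega>. Lf \<omega> q) \<in> borel_measurable N" using Lm[OF q0] .
    have [measurable]: "v \<in> borel_measurable N" by (rule vm)
    show "{\<omega> \<in> space N. enn2real (v \<omega>) < q} \<inter> {\<omega> \<in> space N. Lf \<omega> q < a} \<in> sets N"
      by measurable
  qed
  then show "{\<omega> \<in> space N. Lf \<omega> (enn2real (v \<omega>)) < a} \<in> sets N" unfolding eq .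
qed


theorem mainTheorem6:
  fixes M :: "'a measure" and G :: "real \<Rightarrow> 'a measure"
    and Ee :: "'a \<Rightarrow> real" and X :: "real \<Rightarrow> 'a \<Rightarrow> real" and r :: real
  assumes "prob_space M"
    and "right_continuous_filtration M G"
    and "distributed M lborel Ee (exponential_density 1)"
    and "prob_space.indep_set M (sets (G_infty M G))
           {Ee -` A \<inter> space M | A. A \<in> sets (borel :: real measure)}"
    and "r > 0"
    and "progressive G X"
    and "\<forall>\<omega>\<in>space M. mono_on {0..} (\<lambda>t. X t \<omega>)"
    and "\<forall>\<omega>\<in>space M. \<forall>t\<ge>0. continuous (at_right t) (\<lambda>s. X s \<omega>)"
    and "\<forall>\<omega>\<in>space M. Lim at_top (\<lambda>t. ereal (X t \<omega>)) > 1"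
  defines "\<rho> \<equiv> (\<lambda>t \<omega>. max (min (X t \<omega>) 1) 0)"
    and "\<gamma> \<equiv> (\<lambda>(i::real) t \<omega>. max (r - i + max (min (X t \<omega>) 1) 0) 0)"
    and "\<tau> \<equiv> (\<lambda>(i::real) \<omega>. Inf {ennreal t | t. 0 \<le> t \<and> X t \<omega> \<ge> i})"
  shows "(\<forall>i\<in>{0..1}. optimal_stopping M G r (\<gamma> i) Ee (\<tau> i)) \<and>
         (\<forall>\<omega>\<in>space M. \<forall>t\<ge>0. measure lborel {i\<in>{0..1}. \<tau> i \<omega> \<le> ennreal t} = \<rho> t \<omega>)"
proof -
  note P = assms(1) and rc = assms(2) and D = assms(3) and ind = assms(4) and r0 = assms(5)
    and prog = assms(6) and monoX = assms(7) and rcX = assms(8) and limX = assms(9)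
  interpret prob_space M by (rule P)
  have spMG: "space (G_infty M G) = space M" and subMG: "sets (G_infty M G) \<subseteq> sets M"
    and GsubMG: "\<And>t. 0 \<le> t \<Longrightarrow> sets (G t) \<subseteq> sets (G_infty M G)"
    using MG_props[OF rc] by auto
  have spG: "\<And>t. space (G t) = space M"
    using rc unfolding right_continuous_filtration_def by auto
  have mo: "\<And>\<omega>. \<omega> \<in> space M \<Longrightarrow> mono_on {0..} (\<lambda>t. X t \<omega>)" using monoX by blast
  have rcw: "\<And>\<omega>. \<omega> \<in> space M \<Longrightarrow> \<forall>t\<ge>0. continuous (at_right t) (\<lambda>s. X s \<omega>)" using rcX by blast
  have big: "\<And>\<omega>. \<omega> \<in> space M \<Longrightarrow> \<exists>t\<ge>0. 1 < X t \<omega>"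
    using lim_gt1 mo limX by blast
  have tau_iff: "\<And>i \<omega> t. \<omega> \<in> space M \<Longrightarrow> 0 \<le> t \<Longrightarrow> \<tau> i \<omega> \<le> ennreal t \<longleftrightarrow> i \<le> X t \<omega>"
  proof -
    fix i t :: real and \<omega> assume w: "\<omega> \<in> space M" and t: "0 \<le> t"
    show "\<tau> i \<omega> \<le> ennreal t \<longleftrightarrow> i \<le> X t \<omega>"
      unfolding \<tau>_def by (rule tau_le[OF mo[OF w] rcw[OF w] t])
  qed
  have part2: "\<forall>\<omega>\<in>space M. \<forall>t\<ge>0. measure lborel {i\<in>{0..1}. \<tau> i \<omega> \<le> ennreal t} = \<rho> t \<omega>"
  proof (intro ballI allI impI)
    fix \<omega> and t :: real assume w: "\<omega> \<in> space M" and t: "0 \<le> t"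
    have ti: "\<And>i. \<tau> i \<omega> \<le> ennreal t \<longleftrightarrow> i \<le> X t \<omega>" using tau_iff[OF w t] by blast
    have eq: "{i\<in>{0..1}. \<tau> i \<omega> \<le> ennreal t} = {0..min (X t \<omega>) 1}"
      unfolding ti by auto
    show "measure lborel {i\<in>{0..1}. \<tau> i \<omega> \<le> ennreal t} = \<rho> t \<omega>"
    proof (cases "0 \<le> min (X t \<omega>) 1")
      case True
      then show ?thesis unfolding eq \<rho>_def by simp
    next
      case False
      then have "{0..min (X t \<omega>) 1} = {}" by auto
      then show ?thesis unfolding eq \<rho>_def using False by simp
    qed
  qed
  have part1: "optimal_stopping M G r (\<gamma> i) Ee (\<tau> i)" if i: "i \<in> {0..1}" for i
  proof -
    have i0: "0 \<le> i" and i1: "i \<le> 1" using i by auto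
    have gam_eq: "\<gamma> i = (\<lambda>s \<omega>. gam r i (X s \<omega>))" unfolding \<gamma>_def gam_def by simp
    define LW where "LW \<omega> = LG (\<lambda>t. X t \<omega>) r i" for \<omega>
    have Lmono: "LW \<omega> a \<le> LW \<omega> b" if "\<omega> \<in> space M" "0 \<le> a" "a \<le> b" for \<omega> a b
      unfolding LW_def using LG_mono[OF mo[OF that(1)] r0 i0 i1 that(2,3)] .
    have Llip: "LW \<omega> b - LW \<omega> a \<le> (r + 1) * (b - a)" if "\<omega> \<in> space M" "0 \<le> a" "a \<le> b" for \<omega> a b
      unfolding LW_def using LG_lip[OF mo[OF that(1)] r0 i0 i1 that(2,3)] .
    have Lnn: "0 \<le> LW \<omega> t" if "\<omega> \<in> space M" for \<omega> t
      unfolding LW_def by (rule LG_nn[OF mo[OF that] r0 i0 i1])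
    have Lam_eqW: "(\<integral>\<^sup>+ s\<in>{0..t}. ennreal (gam r i (X s \<omega>)) \<partial>lborel) = ennreal (LW \<omega> t)"
      if "\<omega> \<in> space M" "0 \<le> t" for \<omega> t
      unfolding LW_def using Lam_eq[OF mo[OF that(1)] r0 i0 i1 that(2)] .
    have Lmeas: "(\<lambda>\<omega>. LW \<omega> t) \<in> borel_measurable (G_infty M G)" if t: "0 \<le> t" for t
    proof -
      have [measurable]: "(\<lambda>p. X (fst p) (snd p)) \<in> borel_measurable (restrict_space lborel {0..t} \<Otimes>\<^sub>M G t)"
        using prog t unfolding progressive_def by blast
      have "(\<lambda>p. ennreal (gam r i (X (fst p) (snd p)))) \<in> borel_measurable (restrict_space lborel {0..t} \<Otimes>\<^sub>M G t)"
        unfolding gam_def by measurable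
      from int_meas[OF this]
      have m1: "(\<lambda>\<omega>. \<integral>\<^sup>+ s\<in>{0..t}. ennreal (gam r i (X s \<omega>)) \<partial>lborel) \<in> borel_measurable (G t)" by simp
      have "(\<lambda>\<omega>. enn2real (\<integral>\<^sup>+ s\<in>{0..t}. ennreal (gam r i (X s \<omega>)) \<partial>lborel)) \<in> borel_measurable (G t)"
        using m1 by measurable
      then have "(\<lambda>\<omega>. LW \<omega> t) \<in> borel_measurable (G t)"
        by (rule measurable_cong[THEN iffD1, rotated]) (simp add: spG Lam_eqW[OF _ t] Lnn)
      then show ?thesis using meas_sub[OF _ GsubMG[OF t]] spMG spG by metis
    qed
    have tau_st: "G_stopping_time G (\<tau> i)"
      unfolding G_stopping_time_def
    proof (intro allI impI)
      fix t :: real assume t: "0 \<le> t"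
      have [measurable]: "X t \<in> borel_measurable (G t)" by (rule Xt_meas[OF prog t])
      have "Measurable.pred (G t) (\<lambda>\<omega>. i \<le> X t \<omega>)" by measurable
      moreover have "{\<omega> \<in> space (G t). \<tau> i \<omega> \<le> ennreal t} = {\<omega> \<in> space (G t). i \<le> X t \<omega>}"
        using tau_iff[OF _ t] spG by auto
      ultimately show "Measurable.pred (G t) (\<lambda>\<omega>. \<tau> i \<omega> \<le> ennreal t)" by (simp add: pred_def)
    qed
    define hh where "hh = (\<lambda>(v :: 'a \<Rightarrow> ennreal) \<omega>. if v \<omega> = \<infinity> then 0 else ennreal (exp (r * enn2real (v \<omega>))))"
    define cc where "cc = (\<lambda>(v :: 'a \<Rightarrow> ennreal) \<omega>. LW \<omega> (enn2real (v \<omega>)))"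
    have AEe: "AE \<omega> in M. 0 \<le> Ee \<omega>"
    proof -
      have "Measurable.pred lborel (\<lambda>x::real. 0 \<le> x)" by measurable
      from distributed_AE2[OF D this] show ?thesis by (simp add: erlang_density_def)
    qed
    have dt_eq: "default_time (\<gamma> i) Ee \<omega> = Inf {ennreal t | t. 0 \<le> t \<and> (\<integral>\<^sup>+ s\<in>{0..t}. ennreal (gam r i (X s \<omega>)) \<partial>lborel) = ennreal (Ee \<omega>)}" for \<omega>
      unfolding default_time_def gam_eq by simp
    have V1: "agent_value M r (\<gamma> i) Ee v = (\<integral>\<^sup>+\<omega>. hh v \<omega> * indicator {cc v \<omega><..} (Ee \<omega>) \<partial>M)" for v
      unfolding agent_value_def
    proof (rule nn_integral_cong_AE)
      show "AE \<omega> in M. payoff r (v \<omega>) (default_time (\<gamma> i) Ee \<omega>) = hh v \<omega> * indicator {cc v \<omega><..} (Ee \<omega>)"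
        using AEe AE_space
      proof eventually_elim
        case (elim \<omega>)
        then have w: "\<omega> \<in> space M" and e: "0 \<le> Ee \<omega>" by auto
        note th = theta[OF mo[OF w] r0 i0 i1 big[OF w] e]
        have th1: "default_time (\<gamma> i) Ee \<omega> \<noteq> \<infinity>" unfolding dt_eq using th(1) .
        have th2: "ennreal s < default_time (\<gamma> i) Ee \<omega> \<longleftrightarrow> LW \<omega> s < Ee \<omega>" if "0 \<le> s" for s
          unfolding dt_eq LW_def using th(2)[OF that] .
        show ?case
        proof (cases "v \<omega>" rule: ennreal_cases)
          case (real s)
          then show ?thesis using th1 th2[of s] unfolding payoff_def hh_def cc_def
            by (auto simp: indicator_def)
        next
          case top
          then show ?thesis using th1 unfolding payoff_def hh_def by simp
        qed
      qed
    qed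
    have V2: "agent_value M r (\<gamma> i) Ee v = (\<integral>\<^sup>+\<omega>. hh v \<omega> * ennreal (exp (- cc v \<omega>)) \<partial>M)"
      if vs: "G_stopping_time G v" for v
    proof -
      have vm[measurable]: "v \<in> borel_measurable (G_infty M G)" by (rule stopping_meas[OF rc vs])
      have hm: "hh v \<in> borel_measurable (G_infty M G)" unfolding hh_def by measurable
      have cm: "cc v \<in> borel_measurable (G_infty M G)" unfolding cc_def
        by (rule cc_meas[where K="r + 1", OF Lmeas vm]) (use Lmono Llip spMG r0 in auto)
      show ?thesis unfolding V1
        by (rule indep_exp_integral[OF P subMG spMG ind D hm cm]) (simp add: cc_def Lnn)
    qed
    have path: "hh v \<omega> * ennreal (exp (- cc v \<omega>)) \<le> hh (\<tau> i) \<omega> * ennreal (exp (- cc (\<tau> i) \<omega>))"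
      if w: "\<omega> \<in> space M" for v \<omega>
    proof -
      have tauw: "\<tau> i \<omega> = Inf {ennreal u | u. 0 \<le> u \<and> X u \<omega> \<ge> i}" unfolding \<tau>_def by simp
      note op = opt_path[OF mo[OF w] r0 i0 i1 big[OF w] rcw[OF w], folded tauw]
      define T where "T = enn2real (\<tau> i \<omega>)"
      have tfin: "\<tau> i \<omega> \<noteq> \<infinity>" using op(1) ennreal_neq_top[of "enn2real (\<tau> i \<omega>)"] by (metis infinity_ennreal_def)
      have rhs: "hh (\<tau> i) \<omega> * ennreal (exp (- cc (\<tau> i) \<omega>)) = ennreal (exp (r * T - LW \<omega> T))"
        unfolding hh_def cc_def T_def using tfin by (simp add: ennreal_mult'[symmetric] exp_diff exp_minus field_simps)
      show ?thesis
      proof (cases "v \<omega> = \<infinity>")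
        case True
        then show ?thesis unfolding hh_def by simp
      next
        case False
        define s where "s = enn2real (v \<omega>)"
        have s0: "0 \<le> s" unfolding s_def by simp
        have lhs: "hh v \<omega> * ennreal (exp (- cc v \<omega>)) = ennreal (exp (r * s - LW \<omega> s))"
          unfolding hh_def cc_def s_def using False by (simp add: ennreal_mult'[symmetric] exp_diff exp_minus field_simps)
        have "r * s - LW \<omega> s \<le> r * T - LW \<omega> T"
          using op(2)[OF s0] unfolding LW_def T_def .
        then show ?thesis unfolding lhs rhs by (intro ennreal_leI) simp
      qed
    qed
    have le: "agent_value M r (\<gamma> i) Ee v \<le> agent_value M r (\<gamma> i) Ee (\<tau> i)" if vs: "G_stopping_time G v" for v
      unfolding V2[OF vs] V2[OF tau_st] by (intro nn_integral_mono path)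
    show ?thesis unfolding optimal_stopping_def
    proof (intro conjI tau_st antisym)
      show "agent_value M r (\<gamma> i) Ee (\<tau> i) \<le> (SUP \<sigma>\<in>{\<sigma>. G_stopping_time G \<sigma>}. agent_value M r (\<gamma> i) Ee \<sigma>)"
        by (rule SUP_upper) (simp add: tau_st)
      show "(SUP \<sigma>\<in>{\<sigma>. G_stopping_time G \<sigma>}. agent_value M r (\<gamma> i) Ee \<sigma>) \<le> agent_value M r (\<gamma> i) Ee (\<tau> i)"
        by (rule SUP_least) (simp add: le)
    qed
  qed
  show ?thesis using part1 part2 by blast
qed

end
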